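(* Let $m\ge 2$ and $\alpha\in[0,1]$. Every deterministic voting rule $f$ that takes ranked preferences with intensities as input satisfies, under mandatory elicitation of the intensities, $\mathsf{dist}_\alpha(f)\ge 1+2\alpha$.
   Context: An election $\mathcal E=(N,A,\vec\sigma)$ has a finite set $N$ of $n$ agents, a set $A$ of $m$ alternatives, and a profile $\vec\sigma=(\sigma_1,\dots,\sigma_n)$. Each $\sigma_i=(\pi_i,\Join_i)$ consists of a bijection $\pi_i:[m]\to A$, where $\pi_i(1)$ is agent $i$'s most preferred alternative, and a map $\Join_i:[m-1]\to\{\succ,\succ\!\!\succ\}$ recording strong ($\succ\!\!\succ$) or ordinary ($\succ$) preference between consecutive alternatives. A metric $d$ on $N\cup A$ is nonnegative and symmetric, satisfies the triangle inequality, and has $d(x,x)=0$. For $\alpha\in[0,1]$, the profile $\vec\sigma$ is $\alpha$-consistent with $d$ under mandatory elicitation if for every agent $i$ and every $j\in[m-1]$: - if $\Join_i(j)=\,\succ$, then $d(i,\pi_i(j+1))\ge d(i,\pi_i(j))>\alpha\, d(i,\pi_i(j+1))$; - if $\Join_i(j)=\,\succ\!\!\succ$, then $d(i,\pi_i(j))\le \alpha\, d(i,\pi_i(j+1))$. Let $\mathrm{sc}_d(a)=\sum_{i\in N}d(i,a)$. Define $\mathsf{dist}_\alpha(a,\mathcal E)=\sup_d \mathrm{sc}_d(a)/\min_{b\in A}\mathrm{sc}_d(b)$ over such $\alpha$-consistent metrics $d$. For a deterministic voting rule $f$, $\mathsf{dist}_\alpha(f)=\sup_{\mathcal E}\mathsf{dist}_\alpha(f(\vec\sigma),\mathcal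 E)$ over all elections with $m$ alternatives. *)

theory Defs
  imports Complex_Main "HOL-Library.Extended_Real"
begin

text \<open>Alternatives are 0..<m, agents are 0..<n (n = length of the profile).
 A ballot is (pi, J): pi lists the alternatives from most to least preferred,
 J ! j = True means a strong preference between pi!j and pi!(j+1) (0-indexed),
 J ! j = False an ordinary one.\<close>

type_synonym ballot = "nat list \<times> bool list"

definition valid_ballot :: "nat \<Rightarrow> ballot \<Rightarrow> bool" where
  "valid_ballot m b \<longleftrightarrow> distinct (fst b) \<and> set (fst b) = {0..<m} \<and> length (snd b) = m - 1"

definition valid_profile :: "nat \<Rightarrow> ballot list \<Rightarrow> bool" where
  "valid_profile m P \<longleftrightarrow> (\<forall>b\<in>set P. valid_ballot m b)"

text \<open>Points of N \<union> A: Inl i is agent i, Inr a is alternative a.\<close>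
definition is_metric :: "nat \<Rightarrow> nat \<Rightarrow> (nat + nat \<Rightarrow> nat + nat \<Rightarrow> real) \<Rightarrow> bool" where
  "is_metric n m d \<longleftrightarrow>
     (let X = Inl ` {0..<n} \<union> Inr ` {0..<m} in
      \<forall>x\<in>X. \<forall>y\<in>X. 0 \<le> d x y \<and> d x y = d y x \<and> d x x = 0 \<and>
                   (\<forall>z\<in>X. d x z \<le> d x y + d y z))"

definition consistent :: "real \<Rightarrow> nat \<Rightarrow> ballot list \<Rightarrow> (nat + nat \<Rightarrow> nat + nat \<Rightarrow> real) \<Rightarrow> bool" where
  "consistent \<alpha> m P d \<longleftrightarrow>
     (\<forall>i<length P. \<forall>j<m - 1.
        (let pi = fst (P ! i); J = snd (P ! i);
             x = d (Inl i) (Inr (pi ! j)); y = d (Inl i) (Inr (pi ! (j + 1)))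
         in if J ! j then x \<le> \<alpha> * y else (x \<le> y \<and> \<alpha> * y < x)))"

definition sc :: "(nat + nat \<Rightarrow> nat + nat \<Rightarrow> real) \<Rightarrow> nat \<Rightarrow> nat \<Rightarrow> real" where
  "sc d n a = (\<Sum>i<n. d (Inl i) (Inr a))"

definition opt_sc :: "(nat + nat \<Rightarrow> nat + nat \<Rightarrow> real) \<Rightarrow> nat \<Rightarrow> nat \<Rightarrow> real" where
  "opt_sc d n m = Min ((sc d n) ` {0..<m})"

definition dist_alt :: "real \<Rightarrow> nat \<Rightarrow> ballot list \<Rightarrow> nat \<Rightarrow> ereal" where
  "dist_alt \<alpha> m P a =
     Sup {ereal (sc d (length P) a / opt_sc d (length P) m) | d.
            is_metric (length P) m d \<and> consistent \<alpha> m P d \<and> opt_sc d (length P) m > 0}"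

definition dist_rule :: "real \<Rightarrow> nat \<Rightarrow> (ballot list \<Rightarrow> nat) \<Rightarrow> ereal" where
  "dist_rule \<alpha> m f = (SUP P\<in>{P. valid_profile m P}. dist_alt \<alpha> m P (f P))"

end

theory Submission
  imports Defs
begin

definition sw01 :: "nat \<Rightarrow> nat" where
  "sw01 k = (if k = 0 then 1 else if k = 1 then 0 else k)"

definition Jl :: "real \<Rightarrow> nat \<Rightarrow> bool list" where
  "Jl \<alpha> m = map (\<lambda>j. if j = 0 then True else if j = 1 then 1/2 < \<alpha> else \<alpha> = 1) [0..<m-1]"

definition Pr :: "real \<Rightarrow> nat \<Rightarrow> ballot list" where
  "Pr \<alpha> m = [([0..<m], Jl \<alpha> m), (map sw01 [0..<m], Jl \<alpha> m)]"

definition Dv :: "real \<Rightarrow> real" where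
  "Dv \<alpha> = (if 1/2 < \<alpha> then (1+\<alpha>)/\<alpha> else 1+\<alpha>)"

definition pos :: "real \<Rightarrow> nat \<Rightarrow> nat + nat \<Rightarrow> real \<times> real" where
  "pos \<alpha> z x = (case x of Inl i \<Rightarrow> if i = z then (\<alpha>, 0) else (1+\<alpha>, 0)
     | Inr k \<Rightarrow> if k = z then (0,0) else if k = sw01 z then (1+\<alpha>,0) else (1/2+\<alpha>, Dv \<alpha> - 1/2))"

definition dm :: "real \<Rightarrow> nat \<Rightarrow> nat + nat \<Rightarrow> nat + nat \<Rightarrow> real" where
  "dm \<alpha> z x y = \<bar>fst (pos \<alpha> z x) - fst (pos \<alpha> z y)\<bar> + \<bar>snd (pos \<alpha> z x) - snd (pos \<alpha> z y)\<bar>"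

lemma dm_metric: "is_metric n m (dm \<alpha> z)"
  unfolding is_metric_def dm_def Let_def
  by (auto simp: abs_minus_commute)

lemma valid: "m \<ge> 2 \<Longrightarrow> valid_profile m (Pr \<alpha> m)"
proof -
  assume m: "m \<ge> 2"
  have "inj_on sw01 {0..<m}" unfolding inj_on_def sw01_def by auto
  moreover have "sw01 ` {0..<m} = {0..<m}"
  proof
    show "sw01 ` {0..<m} \<subseteq> {0..<m}" using m by (auto simp: sw01_def)
    show "{0..<m} \<subseteq> sw01 ` {0..<m}"
    proof
      fix x assume "x \<in> {0..<m}"
      then have "sw01 (sw01 x) = x" "sw01 x \<in> {0..<m}" using m by (auto simp: sw01_def)
      then show "x \<in> sw01 ` {0..<m}" by (metis image_eqI)
    qed
  qed
  ultimately show ?thesis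
    unfolding valid_profile_def Pr_def valid_ballot_def Jl_def
    by (auto simp: distinct_map)
qed

lemma Dv_ge: "0 \<le> \<alpha> \<Longrightarrow> \<alpha> \<le> 1 \<Longrightarrow> Dv \<alpha> \<ge> 1 + \<alpha>"
  unfolding Dv_def using mult_le_one[of \<alpha> \<alpha>] by (auto simp: field_simps)

lemma dists:
  assumes "0 \<le> \<alpha>" "\<alpha> \<le> 1" "z < 2"
  shows "dm \<alpha> z (Inl z) (Inr z) = \<alpha>"
    "dm \<alpha> z (Inl z) (Inr (sw01 z)) = 1"
    "dm \<alpha> z (Inl (sw01 z)) (Inr z) = 1 + \<alpha>"
    "dm \<alpha> z (Inl (sw01 z)) (Inr (sw01 z)) = 0"
    "k \<ge> 2 \<Longrightarrow> i < 2 \<Longrightarrow> dm \<alpha> z (Inl i) (Inr k) = Dv \<alpha>"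
  using assms Dv_ge[OF assms(1,2)]
  by (auto simp: dm_def pos_def sw01_def)


lemma Dv_prop: "0 \<le> \<alpha> \<Longrightarrow> \<alpha> \<le> 1 \<Longrightarrow>
   (if 1/2 < \<alpha> then 1 + \<alpha> \<le> \<alpha> * Dv \<alpha> else 1 + \<alpha> \<le> Dv \<alpha> \<and> \<alpha> * Dv \<alpha> < 1)"
proof -
  assume a: "0 \<le> \<alpha>" "\<alpha> \<le> 1"
  have "\<alpha> \<le> 1/2 \<Longrightarrow> \<alpha> * \<alpha> \<le> (1/2) * (1/2)" using a by (intro mult_mono) auto
  then show ?thesis unfolding Dv_def using a mult_le_one[of \<alpha> \<alpha>] by (auto simp: field_simps)
qed

lemma cons:
  assumes a: "0 \<le> \<alpha>" "\<alpha> \<le> 1" and z: "z < 2" and m: "m \<ge> 2"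
  shows "consistent \<alpha> m (Pr \<alpha> m) (dm \<alpha> z)"
  unfolding consistent_def
proof (intro allI impI)
  fix i j assume i: "i < length (Pr \<alpha> m)" and j: "j < m - 1"
  have i2: "i < 2" using i by (simp add: Pr_def)
  have pi: "fst (Pr \<alpha> m ! i) ! k = (if i = 0 then k else sw01 k)" if "k < m" for k
    using that i2 by (auto simp: Pr_def less_2_cases_iff)
  have J: "snd (Pr \<alpha> m ! i) ! j = (if j = 0 then True else if j = 1 then 1/2 < \<alpha> else \<alpha> = 1)"
    using j i2 by (auto simp: Pr_def Jl_def less_2_cases_iff)
  have D: "Dv \<alpha> \<ge> 1 + \<alpha>" using Dv_ge a by auto
  have Dp: "if 1/2 < \<alpha> then 1 + \<alpha> \<le> \<alpha> * Dv \<alpha> else 1 + \<alpha> \<le> Dv \<alpha> \<and> \<alpha> * Dv \<alpha> < 1"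
    using Dv_prop a by blast
  have dd: "dm \<alpha> z (Inl i) (Inr k) = (if k \<ge> 2 then Dv \<alpha> else if i = z then (if k = z then \<alpha> else 1)
      else (if k = z then 1 + \<alpha> else 0))" for k
    using z i2 a D by (auto simp: dm_def pos_def sw01_def less_2_cases_iff)
  have jm: "j < m" "j + 1 < m" using j by auto
  show "let pi = fst (Pr \<alpha> m ! i); J = snd (Pr \<alpha> m ! i);
             x = dm \<alpha> z (Inl i) (Inr (pi ! j)); y = dm \<alpha> z (Inl i) (Inr (pi ! (j + 1)))
         in if J ! j then x \<le> \<alpha> * y else (x \<le> y \<and> \<alpha> * y < x)"
    unfolding Let_def pi[OF jm(1)] pi[OF jm(2)] J dd
    using z i2 a D Dp
    apply (cases "j = 0"; cases "j = 1")
    apply (auto simp: sw01_def less_2_cases_iff split: if_splits)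
    done
qed


lemma scs:
  assumes a: "0 \<le> \<alpha>" "\<alpha> \<le> 1" and z: "z < 2" and k: "k < m" and m: "m \<ge> 2"
  shows "sc (dm \<alpha> z) 2 k = (if k \<ge> 2 then 2 * Dv \<alpha> else if k = z then 1 + 2 * \<alpha> else 1)"
proof -
  have D: "Dv \<alpha> \<ge> 1 + \<alpha>" using Dv_ge a by auto
  have "sc (dm \<alpha> z) 2 k = dm \<alpha> z (Inl 0) (Inr k) + dm \<alpha> z (Inl 1) (Inr k)"
    unfolding sc_def by (simp add: numeral_2_eq_2)
  then show ?thesis using z a D by (auto simp: dm_def pos_def sw01_def less_2_cases_iff)
qed

lemma opt1:
  assumes a: "0 \<le> \<alpha>" "\<alpha> \<le> 1" and z: "z < 2" and m: "m \<ge> 2"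
  shows "opt_sc (dm \<alpha> z) 2 m = 1"
proof -
  have D: "Dv \<alpha> \<ge> 1 + \<alpha>" using Dv_ge a by auto
  have ge: "\<forall>x \<in> sc (dm \<alpha> z) 2 ` {0..<m}. 1 \<le> x"
    using scs[OF a z _ m] D a by auto
  have "sc (dm \<alpha> z) 2 (sw01 z) = 1" using scs[OF a z _ m, of "sw01 z"] z m
    by (auto simp: sw01_def less_2_cases_iff)
  moreover have "sw01 z \<in> {0..<m}" using z m by (auto simp: sw01_def less_2_cases_iff)
  ultimately have "1 \<in> sc (dm \<alpha> z) 2 ` {0..<m}" by (metis image_eqI)
  then show ?thesis unfolding opt_sc_def using ge
    by (intro Min_eqI) auto
qed

theorem lemma2:
  fixes m :: nat and \<alpha> :: real and f :: "ballot list \<Rightarrow> nat"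
  assumes "m \<ge> 2" and "0 \<le> \<alpha>" and "\<alpha> \<le> 1"
    and "\<And>P. valid_profile m P \<Longrightarrow> f P < m"
  shows "dist_rule \<alpha> m f \<ge> ereal (1 + 2 * \<alpha>)"
proof -
  define P where "P = Pr \<alpha> m"
  have vP: "valid_profile m P" using valid assms(1) P_def by blast
  have fP: "f P < m" using assms(4) vP by blast
  define z where "z = (if f P = 1 then 1 else 0::nat)"
  have z: "z < 2" by (simp add: z_def)
  have lP: "length P = 2" by (simp add: P_def Pr_def)
  have D: "Dv \<alpha> \<ge> 1 + \<alpha>" using Dv_ge assms by auto
  have opt: "opt_sc (dm \<alpha> z) 2 m = 1" using opt1 assms z by blast
  have r: "sc (dm \<alpha> z) 2 (f P) \<ge> 1 + 2 * \<alpha>"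
    using scs[OF assms(2,3) z fP assms(1)] D assms(2) unfolding z_def by auto
  have "ereal (1 + 2 * \<alpha>) \<le> ereal (sc (dm \<alpha> z) (length P) (f P) / opt_sc (dm \<alpha> z) (length P) m)"
    using r opt lP by simp
  also have "\<dots> \<le> dist_alt \<alpha> m P (f P)"
    unfolding dist_alt_def
    apply (rule Sup_upper)
    apply (rule CollectI)
    apply (rule exI[of _ "dm \<alpha> z"])
    using dm_metric[of 2 m \<alpha> z] cons[OF assms(2,3) z assms(1)] opt lP P_def by auto
  also have "\<dots> \<le> dist_rule \<alpha> m f"
    unfolding dist_rule_def using vP by (intro SUP_upper) auto
  finally show ?thesis .
qed

end
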